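(* Let $n\ge2$, let $f$ be a $\gamma_{tr3}(P_2\square P_n)$-function such that the number of vertices $v$ with $f(v)=\emptyset$ is minimum among all $\gamma_{tr3}(P_2\square P_n)$-functions, and let $a_j=|f((0,j))|+|f((1,j))|$ for $j\in\{0,\dots,n-1\}$. Then $a_j\ge2$ for every $j\in\{0,1,\dots,n-1\}$.
   Context: $P_m$ denotes the directed path with vertex set $\{0,1,\dots,m-1\}$ and arcs $(i,i+1)$ for $0\le i\le m-2$. The Cartesian product $D_1\square D_2$ has vertex set $V(D_1)\times V(D_2)$, with an arc from $(x_1,y_1)$ to $(x_2,y_2)$ iff either $(x_1,x_2)$ is an arc of $D_1$ and $y_1=y_2$, or $x_1=x_2$ and $(y_1,y_2)$ is an arc of $D_2$. For a digraph $D$ and positive integer $k$, a $k$-rainbow dominating function on $D$ is $f:V(D)\to\mathcal P(\{1,\dots,k\})$ such that every $v$ with $f(v)=\emptyset$ satisfies $\bigcup_{u\in N^-(v)}f(u)=\{1,\dots,k\}$, where $N^-(v)$ is the set of in-neighbors of $v$; its weight is $\sum_v|f(v)|$. It is total if additionally the subdigraph induced by $\{v:f(v)\ne\emptyset\}$ has no isolated vertex (a vertex with neither in- nor out-neighbors in it). $\gamma_{trk}(D)$ is the minimum weight of a total $k$-rainbow dominating function, and a $\gamma_{trk}(D)$-function is one attaining it. *)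

theory Defs
  imports Main
begin

text \<open>A digraph is given by a vertex set V and an arc predicate A (A u v: arc from u to v).\<close>

definition path_V :: "nat \<Rightarrow> nat set" where
  "path_V m = {..<m}"

definition path_A :: "nat \<Rightarrow> nat \<Rightarrow> nat \<Rightarrow> bool" where
  "path_A m i j \<longleftrightarrow> i < m \<and> j < m \<and> j = i + 1"

definition cart_V :: "'a set \<Rightarrow> 'b set \<Rightarrow> ('a \<times> 'b) set" where
  "cart_V V1 V2 = V1 \<times> V2"

definition cart_A :: "('a \<Rightarrow> 'a \<Rightarrow> bool) \<Rightarrow> ('b \<Rightarrow> 'b \<Rightarrow> bool)
    \<Rightarrow> ('a \<times> 'b) \<Rightarrow> ('a \<times> 'b) \<Rightarrow> bool" where
  "cart_A A1 A2 p q \<longleftrightarrow>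
     (A1 (fst p) (fst q) \<and> snd p = snd q) \<or> (fst p = fst q \<and> A2 (snd p) (snd q))"

definition in_nbrs :: "'a set \<Rightarrow> ('a \<Rightarrow> 'a \<Rightarrow> bool) \<Rightarrow> 'a \<Rightarrow> 'a set" where
  "in_nbrs V A v = {u \<in> V. A u v}"

definition rainbow_dom :: "'a set \<Rightarrow> ('a \<Rightarrow> 'a \<Rightarrow> bool) \<Rightarrow> nat \<Rightarrow> ('a \<Rightarrow> nat set) \<Rightarrow> bool" where
  "rainbow_dom V A k f \<longleftrightarrow>
     (\<forall>v\<in>V. f v \<subseteq> {1..k}) \<and>
     (\<forall>v\<in>V. f v = {} \<longrightarrow> (\<Union>u\<in>in_nbrs V A v. f u) = {1..k})"

definition total_rainbow_dom :: "'a set \<Rightarrow> ('a \<Rightarrow> 'a \<Rightarrow> bool) \<Rightarrow> nat \<Rightarrow> ('a \<Rightarrow> nat set) \<Rightarrow> bool" where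
  "total_rainbow_dom V A k f \<longleftrightarrow> rainbow_dom V A k f \<and>
     (\<forall>v\<in>V. f v \<noteq> {} \<longrightarrow> (\<exists>u\<in>V. u \<noteq> v \<and> f u \<noteq> {} \<and> (A u v \<or> A v u)))"

definition rd_weight :: "'a set \<Rightarrow> ('a \<Rightarrow> nat set) \<Rightarrow> nat" where
  "rd_weight V f = (\<Sum>v\<in>V. card (f v))"

definition gamma_tr :: "'a set \<Rightarrow> ('a \<Rightarrow> 'a \<Rightarrow> bool) \<Rightarrow> nat \<Rightarrow> nat" where
  "gamma_tr V A k = (LEAST w. \<exists>f. total_rainbow_dom V A k f \<and> rd_weight V f = w)"

definition gamma_tr_function :: "'a set \<Rightarrow> ('a \<Rightarrow> 'a \<Rightarrow> bool) \<Rightarrow> nat \<Rightarrow> ('a \<Rightarrow> nat set) \<Rightarrow> bool" where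
  "gamma_tr_function V A k f \<longleftrightarrow>
     total_rainbow_dom V A k f \<and> rd_weight V f = gamma_tr V A k"

end

theory Submission
  imports Defs
begin

abbreviation VV :: "nat \<Rightarrow> (nat \<times> nat) set" where
  "VV n \<equiv> cart_V (path_V 2) (path_V n)"
abbreviation AA :: "nat \<Rightarrow> nat \<times> nat \<Rightarrow> nat \<times> nat \<Rightarrow> bool" where
  "AA n \<equiv> cart_A (path_A 2) (path_A n)"

lemma in_nbrs0: "j < n \<Longrightarrow> in_nbrs (VV n) (AA n) (0,j) = (if j=0 then {} else {(0,j-1)})"
  unfolding in_nbrs_def cart_V_def cart_A_def path_V_def path_A_def by auto

lemma in_nbrs1: "j < n \<Longrightarrow> in_nbrs (VV n) (AA n) (1,j) = (if j=0 then {(0,0)} else {(0,j),(1,j-1)})"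
  unfolding in_nbrs_def cart_V_def cart_A_def path_V_def path_A_def by auto

lemma memV: "(i,j) \<in> VV n \<longleftrightarrow> i < 2 \<and> j < n"
  unfolding cart_V_def path_V_def by auto

lemma card_le3: assumes "rainbow_dom (VV n) (AA n) 3 f" "i < 2" "j < n"
  shows "card (f (i,j)) \<le> 3"
proof -
  have "f (i,j) \<subseteq> {1..3}" using assms unfolding rainbow_dom_def by (auto simp: memV)
  then show ?thesis by (metis card_atLeastAtMost card_mono diff_Suc_1 finite_atLeastAtMost numeral_3_eq_3 plus_1_eq_Suc)
qed

lemma fin: assumes "rainbow_dom (VV n) (AA n) 3 f" "i < 2" "j < n"
  shows "finite (f (i,j))"
proof -
  have "f (i,j) \<subseteq> {1..3}" using assms unfolding rainbow_dom_def by (auto simp: memV)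
  then show ?thesis using finite_subset by blast
qed

lemma F2: assumes "rainbow_dom (VV n) (AA n) 3 f" "Suc j < n" "f (0, Suc j) = {}"
  shows "card (f (0,j)) = 3"
proof -
  have "(\<Union>u\<in>in_nbrs (VV n) (AA n) (0, Suc j). f u) = {1..3}"
    using assms unfolding rainbow_dom_def by (auto simp: memV)
  then have "f (0,j) = {1..3}" using in_nbrs0[OF assms(2)] by simp
  then show ?thesis by simp
qed

lemma F3: assumes "rainbow_dom (VV n) (AA n) 3 f" "j < n" "f (1, j) = {}"
  shows "3 \<le> card (f (0,j)) + (if j = 0 then 0 else card (f (1,j-1)))"
proof -
  have U: "(\<Union>u\<in>in_nbrs (VV n) (AA n) (1, j). f u) = {1..3}"
    using assms unfolding rainbow_dom_def by (auto simp: memV)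
  show ?thesis
  proof (cases "j = 0")
    case True
    then have "f (0,j) = {1..3}" using U in_nbrs1[OF assms(2)] by simp
    then show ?thesis using True by simp
  next
    case False
    then have "f (0,j) \<union> f (1,j-1) = {1..3}" using U in_nbrs1[OF assms(2)] by simp
    then have "3 = card (f (0,j) \<union> f (1,j-1))" by simp
    also have "\<dots> \<le> card (f (0,j)) + card (f (1,j-1))" by (rule card_Un_le)
    finally show ?thesis using False by simp
  qed
qed

definition hh :: "nat \<Rightarrow> (nat \<times> nat \<Rightarrow> nat set) \<Rightarrow> nat \<Rightarrow> nat" where
  "hh n f j = (if 1 \<le> j \<and> j < n then
      (if f (0,j) = {} then 1 else 0) + (if f (1,j) = {} \<and> card (f (1,j-1)) \<ge> 2 then 1 else 0) else 0)"

lemma col: assumes "rainbow_dom (VV n) (AA n) 3 f" "j < n"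
  shows "card (f (0,j)) + card (f (1,j)) + hh n f j \<ge> 2 + hh n f (Suc j)"
proof -
  have c0: "card (f (0,j)) \<le> 3" and c1: "card (f (1,j)) \<le> 3"
    using card_le3[OF assms(1) _ assms(2)] by auto
  have f0: "finite (f (0,j))" and f1: "finite (f (1,j))"
    using fin[OF assms(1) _ assms(2)] by auto
  have e0: "f (0,j) = {} \<longleftrightarrow> card (f (0,j)) = 0" using f0 by auto
  have e1: "f (1,j) = {} \<longleftrightarrow> card (f (1,j)) = 0" using f1 by auto
  have n0: "Suc j < n \<Longrightarrow> f (0, Suc j) = {} \<Longrightarrow> card (f (0,j)) = 3" using F2[OF assms(1)] by blast
  have x0: "f (0,0) \<noteq> {}"
  proof
    assume "f (0,0) = {}"
    moreover have "(0::nat,0::nat) \<in> VV n" using assms(2) by (simp add: memV)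
    ultimately have "(\<Union>u\<in>in_nbrs (VV n) (AA n) (0, 0). f u) = {1..3}"
      using assms(1) unfolding rainbow_dom_def by blast
    moreover have "0 < n" using assms(2) by simp
    ultimately show False using in_nbrs0[of 0 n] by simp
  qed
  have n1: "f (1, j) = {} \<Longrightarrow> 3 \<le> card (f (0,j)) + (if j = 0 then 0 else card (f (1,j-1)))"
    using F3[OF assms(1) assms(2)] by blast
  show ?thesis
    unfolding hh_def using c0 c1 e0 e1 n0 n1 x0 assms(2)
    by (cases "j = 0"; auto split: if_splits)
qed

lemma weight_eq: "rd_weight (VV n) g = (\<Sum>j<n. card (g (0,j)) + card (g (1,j)))"
proof -
  have "VV n = {0,1} \<times> {..<n}" unfolding cart_V_def path_V_def by auto
  then have "rd_weight (VV n) g = (\<Sum>x\<in>{0::nat,1}. \<Sum>y<n. card (g (x,y)))"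
    unfolding rd_weight_def by (simp add: sum.cartesian_product split_def)
  then show ?thesis by (simp add: sum.distrib)
qed

lemma lower: assumes "rainbow_dom (VV n) (AA n) 3 f"
  shows "rd_weight (VV n) f \<ge> 2 * n"
proof -
  have "(\<Sum>j<n. card (f (0,j)) + card (f (1,j)) + hh n f j) \<ge> (\<Sum>j<n. 2 + hh n f (Suc j))"
    by (rule sum_mono) (use col[OF assms] in auto)
  moreover have "(\<Sum>j<n. hh n f (Suc j)) = (\<Sum>j<n. hh n f j)"
  proof -
    have "(\<Sum>j<Suc n. hh n f j) = hh n f 0 + (\<Sum>j<n. hh n f (Suc j))" by (rule sum.lessThan_Suc_shift)
    moreover have "(\<Sum>j<Suc n. hh n f j) = (\<Sum>j<n. hh n f j) + hh n f n" by simp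
    moreover have "hh n f 0 = 0" "hh n f n = 0" unfolding hh_def by auto
    ultimately show ?thesis by simp
  qed
  moreover have "(\<Sum>j<n. 2 + hh n f (Suc j)) = 2*n + (\<Sum>j<n. hh n f (Suc j))" by (subst sum.distrib) simp
  moreover have "(\<Sum>j<n. card (f (0,j)) + card (f (1,j)) + hh n f j) = (\<Sum>j<n. card (f (0,j)) + card (f (1,j))) + (\<Sum>j<n. hh n f j)" by (simp add: sum.distrib)
  ultimately show ?thesis unfolding weight_eq by linarith
qed

lemma const_ok: assumes "n \<ge> 2"
  shows "total_rainbow_dom (VV n) (AA n) 3 (\<lambda>_. {1})" (is "?T")
proof -
  have "\<forall>v\<in>VV n. \<exists>u\<in>VV n. u \<noteq> v \<and> (AA n u v \<or> AA n v u)"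
  proof
    fix v assume "v \<in> VV n"
    then obtain i j where v: "v = (i,j)" "i < 2" "j < n" by (cases v) (auto simp: memV)
    show "\<exists>u\<in>VV n. u \<noteq> v \<and> (AA n u v \<or> AA n v u)"
      using v by (intro bexI[of _ "(1-i,j)"]) (auto simp: memV cart_A_def path_A_def less_2_cases_iff)
  qed
  then show ?thesis unfolding total_rainbow_dom_def rainbow_dom_def by auto
qed

lemma const_weight: "rd_weight (VV n) (\<lambda>_. {1}) = 2 * n"
  unfolding weight_eq by simp

theorem lemma4p4:
  fixes n :: nat and f :: "nat \<times> nat \<Rightarrow> nat set"
  defines "V \<equiv> cart_V (path_V 2) (path_V n)"
      and "A \<equiv> cart_A (path_A 2) (path_A n)"
  assumes "n \<ge> 2"
      and "gamma_tr_function V A 3 f"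
      and "\<And>g. gamma_tr_function V A 3 g \<Longrightarrow>
              card {v \<in> V. f v = {}} \<le> card {v \<in> V. g v = {}}"
  shows "\<forall>j < n. card (f (0, j)) + card (f (1, j)) \<ge> 2"
proof -
  let ?g = "\<lambda>_::nat\<times>nat. {1::nat}"
  have gok: "total_rainbow_dom V A 3 ?g" using const_ok[OF assms(3)] unfolding V_def A_def .
  have gw: "rd_weight V ?g = 2 * n" unfolding V_def by (rule const_weight)
  have le: "gamma_tr V A 3 \<le> 2 * n" unfolding gamma_tr_def
    by (rule Least_le) (use gok gw in blast)
  have "\<exists>h. total_rainbow_dom V A 3 h \<and> rd_weight V h = gamma_tr V A 3"
    unfolding gamma_tr_def by (rule LeastI) (use gok gw in blast)
  then obtain h where "total_rainbow_dom V A 3 h" "rd_weight V h = gamma_tr V A 3" by blast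
  then have "gamma_tr V A 3 \<ge> 2 * n" using lower[of n h] unfolding V_def A_def total_rainbow_dom_def by auto
  with le have "gamma_tr V A 3 = 2 * n" by simp
  then have "gamma_tr_function V A 3 ?g" using gok gw unfolding gamma_tr_function_def by simp
  then have "card {v \<in> V. f v = {}} \<le> card {v \<in> V. ?g v = {}}" by (rule assms(5))
  then have "card {v \<in> V. f v = {}} = 0" by simp
  moreover have "finite {v \<in> V. f v = {}}" unfolding V_def cart_V_def path_V_def by simp
  ultimately have ne: "\<forall>v\<in>V. f v \<noteq> {}" by auto
  have rd: "rainbow_dom V A 3 f" using assms(4) unfolding gamma_tr_function_def total_rainbow_dom_def by simp
  show ?thesis
  proof (intro allI impI)
    fix j assume j: "j < n"
    have "(0::nat,j) \<in> V" "(1::nat,j) \<in> V" using j unfolding V_def by (auto simp: memV)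
    then have "f (0,j) \<noteq> {}" "f (1,j) \<noteq> {}" using ne by auto
    moreover have "finite (f (0,j))" "finite (f (1,j))" using fin[of n f] rd j unfolding V_def A_def by auto
    ultimately have "card (f (0,j)) \<ge> 1" "card (f (1,j)) \<ge> 1"
      by (simp_all add: Suc_leI card_gt_0_iff)
    then show "card (f (0, j)) + card (f (1, j)) \<ge> 2" by simp
  qed
qed

end
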